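(* For every positive integer $n$: (a) $\displaystyle\sum_{k=1}^{n}N^p(k)\,\omega(n-k)=\tau(n)$; (b) $\displaystyle\sum_{k=1}^{n}(-1)^{n-k}N^q(k)\,o(n-k)=\tau^s(n)$.
   Context: $N^p(n)$ (resp. $N^q(n)$) is the total number of parts, summed over all partitions (resp. partitions into pairwise distinct parts) of $n$. $\omega(m)=1$ if $m=0$, $\omega(m)=(-1)^k$ if $m=\frac{3k^2\pm k}{2}$ for an integer $k\ge1$, and $\omega(m)=0$ otherwise. $o(m)$ is the number of partitions of $m$ into distinct odd parts, with $o(0)=1$. $\tau(m)$ is the number of positive divisors of $m$ and $\tau^s(m)=\sum_{d\mid m,\,d\ge1}(-1)^{m/d-1}$. *)

theory Defs
  imports Main "HOL-Library.Multiset"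
begin

definition partitions :: "nat \<Rightarrow> nat multiset set" where
  "partitions n = {M. (\<forall>x\<in>#M. 0 < x) \<and> sum_mset M = n}"

definition distinct_partitions :: "nat \<Rightarrow> nat set set" where
  "distinct_partitions n = {A. finite A \<and> (\<forall>x\<in>A. 0 < x) \<and> \<Sum>A = n}"

definition Np :: "nat \<Rightarrow> int" where
  "Np n = (\<Sum>M\<in>partitions n. int (size M))"

definition Nq :: "nat \<Rightarrow> int" where
  "Nq n = (\<Sum>A\<in>distinct_partitions n. int (card A))"

definition odp :: "nat \<Rightarrow> int" where
  "odp m = int (card {A. finite A \<and> (\<forall>x\<in>A. odd x) \<and> \<Sum>A = m})"

definition pent_omega :: "nat \<Rightarrow> int" where
  "pent_omega m =
     (if m = 0 then 1
      else if \<exists>k::nat. 1 \<le> k \<and> (2 * m = 3 * k^2 + k \<or> 2 * m = 3 * k^2 - k)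
      then (-1) ^ (THE k::nat. 1 \<le> k \<and> (2 * m = 3 * k^2 + k \<or> 2 * m = 3 * k^2 - k))
      else 0)"

definition tau :: "nat \<Rightarrow> int" where
  "tau m = int (card {d. 1 \<le> d \<and> d dvd m})"

definition tau_s :: "nat \<Rightarrow> int" where
  "tau_s m = (\<Sum>d | 1 \<le> d \<and> d dvd m. (-1) ^ (m div d - 1))"

end

theory Submission
  imports Defs "HOL-Computational_Algebra.Formal_Power_Series"
begin

unbundle fps_syntax

definition Tn :: "nat \<Rightarrow> nat" where "Tn k = k * (k + 1) div 2"

lemma Tn_0[simp]: "Tn 0 = 0" by (simp add: Tn_def)
lemma Tn_Suc: "Tn (Suc k) = Tn k + Suc k"
proof -
  have "k * (k+1) + 2 * Suc k = Suc k * (Suc k + 1)" by (simp add: algebra_simps)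
  then have "Suc k * (Suc k + 1) div 2 = (k*(k+1) + 2 * Suc k) div 2" by simp
  also have "\<dots> = k*(k+1) div 2 + Suc k" by simp
  finally show ?thesis by (simp add: Tn_def)
qed

lemma Tn_ge: "k \<le> Tn k"
  by (induction k) (auto simp: Tn_Suc)

definition Ep :: "nat \<Rightarrow> int fps" where
  "Ep n = (\<Prod>k\<in>{1..n}. 1 - fps_X ^ k)"

definition ap :: "nat \<Rightarrow> nat \<Rightarrow> int fps" where
  "ap n k = (\<Prod>i\<in>{Suc k..n}. 1 - fps_X ^ i)"

definition Lp :: "nat \<Rightarrow> int fps" where
  "Lp n = (\<Sum>k\<le>n. (-1) ^ k * ap n k * fps_X ^ (n * k + Tn k))"

definition Gp :: "nat \<Rightarrow> nat" where "Gp j = j * j + Tn (j - 1)"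
definition Hp :: "nat \<Rightarrow> nat" where "Hp j = j * j + Tn j"

definition Rp :: "nat \<Rightarrow> int fps" where
  "Rp n = 1 + (\<Sum>j\<in>{1..n}. (-1) ^ j * (fps_X ^ Gp j + fps_X ^ Hp j))"

lemma ap_Suc: "k \<le> n \<Longrightarrow> ap (Suc n) k = ap n k * (1 - fps_X ^ Suc n)"
  unfolding ap_def by (simp add: prod.cl_ivl_Suc)

lemma ap_same[simp]: "ap n n = 1"
  unfolding ap_def by simp

lemma ap_pred: "1 \<le> k \<Longrightarrow> k \<le> n \<Longrightarrow> ap n (k - 1) = (1 - fps_X ^ k) * ap n k"
  unfolding ap_def using prod.atLeast_Suc_atMost[of k n "\<lambda>i. 1 - fps_X ^ i :: int fps"]
  by simp

lemma Lp_step: "Lp (Suc n) = Lp n + (-1) ^ Suc n * (fps_X ^ Gp (Suc n) + fps_X ^ Hp (Suc n))"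
proof -
  define u where "u k = (-1) ^ k * ap n k * fps_X ^ (Suc n * k + Tn k)" for k
  define v where "v k = (-1) ^ k * ap n k * fps_X ^ (Suc n * (k + 1) + Tn k)" for k
  define w where "w k = (-1) ^ k * ap n k * fps_X ^ (n * k + Tn k)" for k
  have L1: "Lp (Suc n) = (\<Sum>k\<le>n. u k - v k) + (-1) ^ Suc n * fps_X ^ (Suc n * Suc n + Tn (Suc n))"
  proof -
    have "Lp (Suc n) = (\<Sum>k\<le>n. (-1) ^ k * ap (Suc n) k * fps_X ^ (Suc n * k + Tn k))
        + (-1) ^ Suc n * ap (Suc n) (Suc n) * fps_X ^ (Suc n * Suc n + Tn (Suc n))"
      unfolding Lp_def by simp
    also have "(\<Sum>k\<le>n. (-1) ^ k * ap (Suc n) k * fps_X ^ (Suc n * k + Tn k)) = (\<Sum>k\<le>n. u k - v k)"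
    proof (rule sum.cong[OF refl])
      fix k assume "k \<in> {..n}"
      then have "k \<le> n" by simp
      then show "(-1) ^ k * ap (Suc n) k * fps_X ^ (Suc n * k + Tn k) = u k - v k"
        unfolding u_def v_def by (simp add: ap_Suc algebra_simps power_add)
    qed
    finally show ?thesis by simp
  qed
  have L0: "Lp n = (\<Sum>k\<le>n. w k)" unfolding Lp_def w_def by simp
  have uw: "u k - w k = (if k = 0 then 0 else v (k - 1))" if "k \<le> n" for k
  proof (cases "k = 0")
    case True then show ?thesis by (simp add: u_def w_def)
  next
    case False
    then obtain j where k: "k = Suc j" by (cases k) auto
    have e: "Suc n * k + Tn k = n * k + Tn k + k" by simp
    have e2: "Suc n * (j + 1) + Tn j = n * k + Tn k" using k by (simp add: Tn_Suc)
    have "u k - w k = (-1) ^ k * (ap n k * (fps_X ^ k - 1)) * fps_X ^ (n * k + Tn k)"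
      unfolding u_def w_def e by (simp add: power_add algebra_simps)
    also have "ap n k * (fps_X ^ k - 1) = - ap n j"
      using ap_pred[of k n] that k by (simp add: algebra_simps)
    finally have "u k - w k = (-1) ^ k * (- ap n j) * fps_X ^ (n * k + Tn k)" .
    moreover have "v j = (-1) ^ j * ap n j * fps_X ^ (n * k + Tn k)"
      unfolding v_def e2 ..
    ultimately show ?thesis using k by simp
  qed
  have "(\<Sum>k\<le>n. u k - v k) = (\<Sum>k\<le>n. w k) + (\<Sum>k\<le>n. u k - w k) - (\<Sum>k\<le>n. v k)"
    by (simp add: sum_subtractf)
  also have "(\<Sum>k\<le>n. u k - w k) = (\<Sum>k\<le>n. (if k = 0 then 0 else v (k - 1)))"
    by (rule sum.cong) (auto simp: uw)
  also have "\<dots> = (\<Sum>k<n. v k)"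
  proof -
    have "(\<Sum>k\<le>n. (if k = 0 then 0 else v (k - 1))) = (\<Sum>k<Suc n. (if k = 0 then 0 else v (k - 1)))"
      by (simp add: lessThan_Suc_atMost)
    also have "\<dots> = (\<Sum>k<n. v k)"
      by (subst sum.lessThan_Suc_shift) simp
    finally show ?thesis .
  qed
  also have "(\<Sum>k\<le>n. v k) = (\<Sum>k<n. v k) + v n"
    by (simp add: lessThan_Suc_atMost[symmetric])
  finally have "(\<Sum>k\<le>n. u k - v k) = Lp n - v n" using L0 by simp
  moreover have "v n = (-1) ^ n * fps_X ^ (Suc n * Suc n + Tn n)"
    by (simp add: v_def)
  ultimately have "Lp (Suc n) = Lp n - (-1) ^ n * fps_X ^ (Suc n * Suc n + Tn n)
       + (-1) ^ Suc n * fps_X ^ (Suc n * Suc n + Tn (Suc n))" using L1 by simp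
  then show ?thesis by (simp add: Gp_def Hp_def algebra_simps)
qed

lemma Lp_Rp: "Lp n = Rp n"
proof (induction n)
  case 0 then show ?case by (simp add: Lp_def Rp_def ap_def)
next
  case (Suc n)
  then show ?case by (simp add: Lp_step Rp_def)
qed

lemma Ep_ap: "Ep n = ap n 0" by (simp add: Ep_def ap_def)

lemma Ep_Lp_nth: assumes "m \<le> n" shows "Ep n $ m = Lp n $ m"
proof -
  have "Lp n $ m = (\<Sum>k\<le>n. ((-1) ^ k * ap n k * fps_X ^ (n * k + Tn k)) $ m)"
    unfolding Lp_def fps_sum_nth by simp
  also have "\<dots> = (\<Sum>k\<le>n. if k = 0 then ap n 0 $ m else 0)"
  proof (rule sum.cong[OF refl])
    fix k assume "k \<in> {..n}"
    show "((-1) ^ k * ap n k * fps_X ^ (n * k + Tn k)) $ m = (if k = 0 then ap n 0 $ m else 0)"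
    proof (cases "k = 0")
      case True then show ?thesis by (simp add: fps_X_power_mult_right_nth)
    next
      case False
      have "n \<le> n * k" using False by simp
      moreover have "1 \<le> Tn k" using Tn_ge[of k] False by simp
      ultimately have "n < n * k + Tn k" by linarith
      then have "m < n * k + Tn k" using assms by simp
      then show ?thesis using False by (simp add: fps_X_power_mult_right_nth)
    qed
  qed
  also have "\<dots> = ap n 0 $ m" by (simp add: sum.delta)
  finally show ?thesis by (simp add: Ep_ap)
qed


lemma Tn_2: "2 * Tn k = k * (k + 1)"
  by (induction k) (auto simp: Tn_Suc algebra_simps)

lemma Gp_Suc: "Gp (Suc j) = Gp j + 3 * j + 1"
  by (cases j) (auto simp: Gp_def Tn_Suc algebra_simps)

lemma Hp_Suc: "Hp (Suc j) = Hp j + 3 * j + 2"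
  by (auto simp: Hp_def Tn_Suc algebra_simps)

lemma Gp_mono: "strict_mono Gp"
  unfolding strict_mono_Suc_iff by (simp add: Gp_Suc)

lemma Hp_mono: "strict_mono Hp"
  unfolding strict_mono_Suc_iff by (simp add: Hp_Suc)

lemma Gp_lt_Hp: "1 \<le> j \<Longrightarrow> Gp j < Hp j"
  by (cases j) (auto simp: Gp_def Hp_def Tn_Suc)

lemma Hp_lt_Gp: "Hp j < Gp (Suc j)"
  by (auto simp: Gp_def Hp_def)

lemma Gp_ne_Hp: assumes "1 \<le> b" shows "Gp a \<noteq> Hp b"
proof (cases "a \<le> b")
  case True
  then have "Gp a \<le> Gp b" using Gp_mono by (simp add: strict_mono_less_eq)
  then show ?thesis using Gp_lt_Hp[OF assms] by simp
next
  case False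
  then have "Suc b \<le> a" by simp
  then have "Gp (Suc b) \<le> Gp a" using Gp_mono by (simp add: strict_mono_less_eq)
  then show ?thesis using Hp_lt_Gp[of b] by simp
qed

lemma Gp_ge: "j \<le> Gp j" unfolding Gp_def by (cases j) auto
lemma Hp_ge: "j \<le> Hp j" unfolding Hp_def by (cases j) auto

lemma Gp_2: assumes "1 \<le> j" shows "2 * Gp j = 3 * j^2 - j"
proof -
  obtain i where j: "j = Suc i" using assms by (cases j) auto
  have "2 * Gp j = 2 * (j * j) + i * (i + 1)" using Tn_2[of i] j by (simp add: Gp_def)
  moreover have "3 * j^2 = 2 * (j * j) + i * (i + 1) + j" using j by (simp add: power2_eq_square algebra_simps)
  ultimately show ?thesis by simp
qed

lemma Hp_2: "2 * Hp j = 3 * j^2 + j"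
  using Tn_2[of j] by (simp add: Hp_def power2_eq_square algebra_simps)

lemma pent_cond: assumes "1 \<le> k" shows "(2 * m = 3 * k^2 + k \<or> 2 * m = 3 * k^2 - k) \<longleftrightarrow> (m = Hp k \<or> m = Gp k)"
proof -
  have h1: "3 * k^2 + k = 2 * Hp k" by (simp add: Hp_2)
  have h2: "3 * k^2 - k = 2 * Gp k" using Gp_2[OF assms] by simp
  show ?thesis unfolding h1 h2 by simp
qed

lemma neg1_pow_nth: "((-1::int fps) ^ j * f) $ m = (-1) ^ j * f $ m"
  by (induction j) (auto simp: algebra_simps)

lemma Rp_nth: "Rp n $ m = (if m = 0 then 1 else 0) +
   (\<Sum>j\<in>{1..n}. (-1) ^ j * ((if m = Gp j then 1 else 0) + (if m = Hp j then 1 else 0)))"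
  unfolding Rp_def by (simp add: fps_sum_nth neg1_pow_nth)

lemma Rp_pent: assumes "m \<le> n" shows "Rp n $ m = pent_omega m"
proof (cases "m = 0")
  case True
  have "(\<Sum>j\<in>{1..n}. (-1) ^ j * ((if m = Gp j then 1 else 0) + (if m = Hp j then 1 else 0)) :: int) = 0"
  proof (rule sum.neutral, rule ballI)
    fix j assume "j \<in> {1..n}"
    then have "1 \<le> Gp j" "1 \<le> Hp j" using Gp_ge[of j] Hp_ge[of j] by auto
    then show "(-1) ^ j * ((if m = Gp j then 1 else 0) + (if m = Hp j then 1 else 0)) = (0::int)"
      using True by auto
  qed
  then show ?thesis using True by (simp add: Rp_nth pent_omega_def)
next
  case False
  let ?P = "\<lambda>k::nat. 1 \<le> k \<and> (2 * m = 3 * k^2 + k \<or> 2 * m = 3 * k^2 - k)"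
  have po: "pent_omega m = (if \<exists>k. ?P k then (-1) ^ (THE k. ?P k) else 0)"
    unfolding pent_omega_def using False by (simp only: if_False simp_thms)
  have P_iff: "?P k \<longleftrightarrow> 1 \<le> k \<and> (m = Hp k \<or> m = Gp k)" for k
    using pent_cond[of k m] by blast
  show ?thesis
  proof (cases "\<exists>k. ?P k")
    case True
    then obtain k where k: "1 \<le> k" "m = Hp k \<or> m = Gp k" using P_iff by blast
    have uniq: "j = k" if "1 \<le> j" "m = Hp j \<or> m = Gp j" for j
      using that k Gp_ne_Hp[of j k] Gp_ne_Hp[of k j] strict_mono_eq[OF Gp_mono] strict_mono_eq[OF Hp_mono]
      by auto
    have Pk: "?P k" using P_iff k by blast
    have the: "(THE k. ?P k) = k"
      using Pk by (rule the_equality) (use P_iff uniq in blast)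
    have kn: "k \<le> n" using k Gp_ge[of k] Hp_ge[of k] assms by auto
    have "(\<Sum>j\<in>{1..n}. (-1) ^ j * ((if m = Gp j then 1 else 0) + (if m = Hp j then 1 else 0)) :: int)
        = (\<Sum>j\<in>{1..n}. if j = k then (-1) ^ k else 0)"
    proof (rule sum.cong[OF refl])
      fix j assume j: "j \<in> {1..n}"
      show "(-1) ^ j * ((if m = Gp j then 1 else 0) + (if m = Hp j then 1 else 0)) = (if j = k then (-1) ^ k else (0::int))"
      proof (cases "j = k")
        case True
        then show ?thesis using k Gp_ne_Hp[of k k] by auto
      next
        case False
        then show ?thesis using uniq[of j] j by auto
      qed
    qed
    also have "\<dots> = (-1) ^ k" using kn k by simp
    finally show ?thesis using False po[unfolded if_P[OF True] the] by (simp add: Rp_nth)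
  next
    case nE: False
    have "(\<Sum>j\<in>{1..n}. (-1) ^ j * ((if m = Gp j then 1 else 0) + (if m = Hp j then 1 else 0)) :: int) = 0"
    proof (rule sum.neutral, rule ballI)
      fix j assume "j \<in> {1..n}"
      then have "1 \<le> j" by simp
      then have "m \<noteq> Gp j" "m \<noteq> Hp j" using nE P_iff by blast+
      then show "(-1) ^ j * ((if m = Gp j then 1 else 0) + (if m = Hp j then 1 else 0)) = (0::int)"
        by simp
    qed
    then show ?thesis using False po[unfolded if_not_P[OF nE]] by (simp add: Rp_nth)
  qed
qed

lemma Ep_pent: "m \<le> n \<Longrightarrow> Ep n $ m = pent_omega m"
  using Ep_Lp_nth Lp_Rp Rp_pent by simp

unbundle fps_syntax

definition pb :: "nat \<Rightarrow> nat \<Rightarrow> nat multiset set" where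
  "pb N m = {M. (\<forall>x\<in>#M. 0 < x \<and> x \<le> N) \<and> sum_mset M = m}"

lemma size_le_sum: "(\<forall>x\<in>#M. 0 < x) \<Longrightarrow> size M \<le> sum_mset (M::nat multiset)"
  by (induction M) auto

lemma mem_le_sum: "x \<in># M \<Longrightarrow> x \<le> sum_mset (M::nat multiset)"
  by (induction M) auto

lemma finite_pb: "finite (pb N m)"
proof -
  have "pb N m \<subseteq> (\<Union>s\<in>{0..m}. multisets_of_size {1..N} s)"
  proof
    fix M assume M: "M \<in> pb N m"
    then have "size M \<le> m" using size_le_sum[of M] by (auto simp: pb_def)
    moreover have "M \<in> multisets_of_size {1..N} (size M)"
      using M by (auto simp: pb_def multisets_of_size_def)
    ultimately show "M \<in> (\<Union>s\<in>{0..m}. multisets_of_size {1..N} s)" by auto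
  qed
  moreover have "finite (\<Union>s\<in>{0..m}. multisets_of_size {1..N} s)" by auto
  ultimately show ?thesis by (rule finite_subset)
qed

lemma pb_0: "pb 0 m = (if m = 0 then {{#}} else {})"
proof -
  have "M \<in> pb 0 m \<longleftrightarrow> M = {#} \<and> m = 0" for M
  proof
    assume "M \<in> pb 0 m"
    then have h: "\<forall>x\<in>#M. 0 < x \<and> x \<le> 0" "sum_mset M = m" by (auto simp: pb_def)
    then have "set_mset M = {}" by fastforce
    then show "M = {#} \<and> m = 0" using h by simp
  qed (auto simp: pb_def)
  then show ?thesis by auto
qed

lemma pb_Suc: "pb (Suc N) m = pb N m \<union> (if Suc N \<le> m then add_mset (Suc N) ` pb (Suc N) (m - Suc N) else {})"
proof (rule set_eqI)
  fix M
  show "M \<in> pb (Suc N) m \<longleftrightarrow> M \<in> pb N m \<union> (if Suc N \<le> m then add_mset (Suc N) ` pb (Suc N) (m - Suc N) else {})"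
  proof
    assume M: "M \<in> pb (Suc N) m"
    show "M \<in> pb N m \<union> (if Suc N \<le> m then add_mset (Suc N) ` pb (Suc N) (m - Suc N) else {})"
    proof (cases "Suc N \<in># M")
      case True
      define M' where "M' = M - {#Suc N#}"
      have MM: "M = add_mset (Suc N) M'" using True by (simp add: M'_def)
      have s: "sum_mset M = Suc N + sum_mset M'" using MM by simp
      have "\<forall>x\<in>#M'. 0 < x \<and> x \<le> Suc N" using M MM by (auto simp: pb_def)
      then have "M' \<in> pb (Suc N) (m - Suc N)" "Suc N \<le> m" using M s by (auto simp: pb_def)
      then show ?thesis using MM by auto
    next
      case False
      then have "\<forall>x\<in>#M. 0 < x \<and> x \<le> N" using M by (auto simp: pb_def le_Suc_eq)
      then show ?thesis using M by (auto simp: pb_def)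
    qed
  next
    assume "M \<in> pb N m \<union> (if Suc N \<le> m then add_mset (Suc N) ` pb (Suc N) (m - Suc N) else {})"
    then show "M \<in> pb (Suc N) m"
      by (auto simp: pb_def split: if_splits)
  qed
qed

lemma card_pb_Suc: "card (pb (Suc N) m) = card (pb N m) + (if Suc N \<le> m then card (pb (Suc N) (m - Suc N)) else 0)"
proof -
  have nin: "Suc N \<notin># M" if "M \<in> pb N m" for M
  proof
    assume "Suc N \<in># M"
    with that have "Suc N \<le> N" unfolding pb_def by blast
    then show False by simp
  qed
  have disj: "pb N m \<inter> add_mset (Suc N) ` pb (Suc N) (m - Suc N) = {}"
    using nin by fastforce
  have inj: "inj_on (add_mset (Suc N)) (pb (Suc N) (m - Suc N))"
    unfolding inj_on_def by simp
  show ?thesis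
    using card_Un_disjoint[OF finite_pb finite_imageI[OF finite_pb] disj] card_image[OF inj]
    by (subst pb_Suc[of N m]) simp
qed

definition Pf :: "nat \<Rightarrow> int fps" where
  "Pf N = Abs_fps (\<lambda>m. int (card (pb N m)))"

lemma Pf_0: "Pf 0 = 1"
  by (rule fps_ext) (simp add: Pf_def pb_0)

lemma Pf_Suc: "(1 - fps_X ^ Suc N) * Pf (Suc N) = Pf N"
proof (rule fps_ext)
  fix m
  have "((1 - fps_X ^ Suc N) * Pf (Suc N)) $ m = Pf (Suc N) $ m - (fps_X ^ Suc N * Pf (Suc N)) $ m"
    by (simp add: algebra_simps)
  also have "\<dots> = Pf N $ m"
    unfolding fps_X_power_mult_nth using card_pb_Suc[of N m] by (simp add: Pf_def)
  finally show "((1 - fps_X ^ Suc N) * Pf (Suc N)) $ m = Pf N $ m" .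
qed

lemma Ep_Suc: "Ep (Suc N) = Ep N * (1 - fps_X ^ Suc N)"
  unfolding Ep_def by (simp add: prod.cl_ivl_Suc)

lemma Ep_Pf: "Ep N * Pf N = 1"
proof (induction N)
  case 0 then show ?case by (simp add: Ep_def Pf_0)
next
  case (Suc N)
  have "Ep (Suc N) * Pf (Suc N) = Ep N * ((1 - fps_X ^ Suc N) * Pf (Suc N))"
    unfolding Ep_Suc by (simp only: mult.assoc)
  also have "\<dots> = Ep N * Pf N" by (simp only: Pf_Suc)
  also have "\<dots> = 1" by (rule Suc.IH)
  finally show ?case .
qed

lemma pb_partitions: assumes "m \<le> N" shows "pb N m = partitions m"
proof -
  have "x \<le> N" if "x \<in># M" "sum_mset M = m" for x M using mem_le_sum[OF that(1)] that(2) assms by simp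
  then show ?thesis unfolding pb_def partitions_def by blast
qed

lemma conv_p: "(\<Sum>i=0..m. int (card (partitions i)) * pent_omega (m - i)) = (if m = 0 then 1 else 0)"
proof -
  have "(Pf m * Ep m) $ m = (1::int fps) $ m" using Ep_Pf[of m] by (simp add: mult.commute)
  moreover have "(Pf m * Ep m) $ m = (\<Sum>i=0..m. int (card (partitions i)) * pent_omega (m - i))"
    unfolding fps_mult_nth
    by (rule sum.cong) (auto simp: Pf_def pb_partitions Ep_pent)
  ultimately show ?thesis by simp
qed

unbundle fps_syntax

definition qb :: "nat \<Rightarrow> nat \<Rightarrow> nat set set" where
  "qb N m = {A. A \<subseteq> {1..N} \<and> \<Sum>A = m}"

definition ob :: "nat \<Rightarrow> nat \<Rightarrow> nat set set" where
  "ob N m = {A. A \<subseteq> {1..N} \<and> (\<forall>x\<in>A. odd x) \<and> \<Sum>A = m}"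

lemma finite_qb: "finite (qb N m)"
  by (rule finite_subset[of _ "Pow {1..N}"]) (auto simp: qb_def)

lemma finite_ob: "finite (ob N m)"
  by (rule finite_subset[of _ "Pow {1..N}"]) (auto simp: ob_def)

lemma qb_0: "qb 0 m = (if m = 0 then {{}} else {})"
  by (auto simp: qb_def)

lemma ob_0: "ob 0 m = (if m = 0 then {{}} else {})"
  by (auto simp: ob_def)

lemma sub_split:
  assumes "A \<subseteq> {1..Suc N}"
  shows "(Suc N \<notin> A \<and> A \<subseteq> {1..N}) \<or> (Suc N \<in> A \<and> A - {Suc N} \<subseteq> {1..N} \<and> \<Sum>A = Suc N + \<Sum>(A - {Suc N}) \<and> A = insert (Suc N) (A - {Suc N}))"
proof (cases "Suc N \<in> A")
  case True
  have fin: "finite A" using assms finite_subset by blast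
  have "\<Sum>A = Suc N + \<Sum>(A - {Suc N})" using sum.remove[OF fin True, of "\<lambda>x. x"] by simp
  moreover have "A - {Suc N} \<subseteq> {1..N}" using assms by (auto simp: le_Suc_eq)
  ultimately show ?thesis using True by auto
next
  case False
  then have "A \<subseteq> {1..N}" using assms by (auto simp: le_Suc_eq)
  then show ?thesis using False by auto
qed

lemma sum_insert_new: "A \<subseteq> {1..N} \<Longrightarrow> \<Sum>(insert (Suc N) A) = Suc N + \<Sum>A"
proof -
  assume a: "A \<subseteq> {1..N}"
  then have "finite A" using finite_subset by blast
  moreover have "Suc N \<notin> A" using a by auto
  ultimately show ?thesis by simp
qed

lemma qb_Suc: "qb (Suc N) m = qb N m \<union> (if Suc N \<le> m then insert (Suc N) ` qb N (m - Suc N) else {})"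
proof (rule set_eqI)
  fix A
  show "A \<in> qb (Suc N) m \<longleftrightarrow> A \<in> qb N m \<union> (if Suc N \<le> m then insert (Suc N) ` qb N (m - Suc N) else {})"
  proof
    assume A: "A \<in> qb (Suc N) m"
    then have As: "A \<subseteq> {1..Suc N}" "\<Sum>A = m" by (auto simp: qb_def)
    from sub_split[OF As(1)] show "A \<in> qb N m \<union> (if Suc N \<le> m then insert (Suc N) ` qb N (m - Suc N) else {})"
    proof
      assume "Suc N \<notin> A \<and> A \<subseteq> {1..N}"
      then show ?thesis using As by (auto simp: qb_def)
    next
      assume h: "Suc N \<in> A \<and> A - {Suc N} \<subseteq> {1..N} \<and> \<Sum>A = Suc N + \<Sum>(A - {Suc N}) \<and> A = insert (Suc N) (A - {Suc N})"
      then have "A - {Suc N} \<in> qb N (m - Suc N)" "Suc N \<le> m" using As by (auto simp: qb_def)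
      then have B: "A - {Suc N} \<in> qb N (m - Suc N)" "Suc N \<le> m" by auto
      have Aeq: "A = insert (Suc N) (A - {Suc N})" using h by blast
      have img: "A \<in> insert (Suc N) ` qb N (m - Suc N)" by (rule rev_image_eqI[where f="insert (Suc N)", OF B(1) Aeq])
      show ?thesis unfolding if_P[OF B(2)] using img by (rule UnI2)
    qed
  next
    assume "A \<in> qb N m \<union> (if Suc N \<le> m then insert (Suc N) ` qb N (m - Suc N) else {})"
    then show "A \<in> qb (Suc N) m"
    proof
      assume "A \<in> qb N m" then show ?thesis by (auto simp: qb_def)
    next
      assume "A \<in> (if Suc N \<le> m then insert (Suc N) ` qb N (m - Suc N) else {})"
      then obtain B where B: "Suc N \<le> m" "B \<in> qb N (m - Suc N)" "A = insert (Suc N) B"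
        by (auto split: if_splits)
      then have "B \<subseteq> {1..N}" "\<Sum>B = m - Suc N" by (auto simp: qb_def)
      then show ?thesis using B sum_insert_new[of B N] by (auto simp: qb_def)
    qed
  qed
qed

lemma ob_Suc: "ob (Suc N) m = ob N m \<union> (if odd (Suc N) \<and> Suc N \<le> m then insert (Suc N) ` ob N (m - Suc N) else {})"
proof (rule set_eqI)
  fix A
  show "A \<in> ob (Suc N) m \<longleftrightarrow> A \<in> ob N m \<union> (if odd (Suc N) \<and> Suc N \<le> m then insert (Suc N) ` ob N (m - Suc N) else {})"
  proof
    assume A: "A \<in> ob (Suc N) m"
    then have As: "A \<subseteq> {1..Suc N}" "\<Sum>A = m" "\<forall>x\<in>A. odd x" by (auto simp: ob_def)
    from sub_split[OF As(1)] show "A \<in> ob N m \<union> (if odd (Suc N) \<and> Suc N \<le> m then insert (Suc N) ` ob N (m - Suc N) else {})"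
    proof
      assume "Suc N \<notin> A \<and> A \<subseteq> {1..N}"
      then show ?thesis using As by (auto simp: ob_def)
    next
      assume h: "Suc N \<in> A \<and> A - {Suc N} \<subseteq> {1..N} \<and> \<Sum>A = Suc N + \<Sum>(A - {Suc N}) \<and> A = insert (Suc N) (A - {Suc N})"
      then have "A - {Suc N} \<in> ob N (m - Suc N)" "Suc N \<le> m" "odd (Suc N)" using As by (auto simp: ob_def)
      then have B: "A - {Suc N} \<in> ob N (m - Suc N)" "odd (Suc N) \<and> Suc N \<le> m" by auto
      have Aeq: "A = insert (Suc N) (A - {Suc N})" using h by blast
      have img: "A \<in> insert (Suc N) ` ob N (m - Suc N)" by (rule rev_image_eqI[where f="insert (Suc N)", OF B(1) Aeq])
      show ?thesis unfolding if_P[OF B(2)] using img by (rule UnI2)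
    qed
  next
    assume "A \<in> ob N m \<union> (if odd (Suc N) \<and> Suc N \<le> m then insert (Suc N) ` ob N (m - Suc N) else {})"
    then show "A \<in> ob (Suc N) m"
    proof
      assume "A \<in> ob N m" then show ?thesis by (auto simp: ob_def)
    next
      assume "A \<in> (if odd (Suc N) \<and> Suc N \<le> m then insert (Suc N) ` ob N (m - Suc N) else {})"
      then obtain B where B: "odd (Suc N)" "Suc N \<le> m" "B \<in> ob N (m - Suc N)" "A = insert (Suc N) B"
        by (auto split: if_splits)
      then have "B \<subseteq> {1..N}" "\<Sum>B = m - Suc N" "\<forall>x\<in>B. odd x" by (auto simp: ob_def)
      then show ?thesis using B sum_insert_new[of B N] by (auto simp: ob_def)
    qed
  qed
qed

lemma card_qb_Suc: "card (qb (Suc N) m) = card (qb N m) + (if Suc N \<le> m then card (qb N (m - Suc N)) else 0)"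
proof -
  have nin: "Suc N \<notin> A" if "A \<in> qb N m'" for A m' using that by (auto simp: qb_def)
  have disj: "qb N m \<inter> insert (Suc N) ` qb N (m - Suc N) = {}"
    using nin by fastforce
  have inj: "inj_on (insert (Suc N)) (qb N (m - Suc N))"
    unfolding inj_on_def using nin insert_ident by metis
  show ?thesis
    using card_Un_disjoint[OF finite_qb finite_imageI[OF finite_qb] disj] card_image[OF inj]
    by (subst qb_Suc[of N m]) simp
qed

lemma card_ob_Suc: "card (ob (Suc N) m) = card (ob N m) + (if odd (Suc N) \<and> Suc N \<le> m then card (ob N (m - Suc N)) else 0)"
proof -
  have nin: "Suc N \<notin> A" if "A \<in> ob N m'" for A m' using that by (auto simp: ob_def)
  have disj: "ob N m \<inter> insert (Suc N) ` ob N (m - Suc N) = {}"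
    using nin by fastforce
  have inj: "inj_on (insert (Suc N)) (ob N (m - Suc N))"
    unfolding inj_on_def using nin insert_ident by metis
  show ?thesis
    using card_Un_disjoint[OF finite_ob finite_imageI[OF finite_ob] disj] card_image[OF inj]
    by (subst ob_Suc[of N m]) simp
qed

definition Qf :: "nat \<Rightarrow> int fps" where
  "Qf N = Abs_fps (\<lambda>m. int (card (qb N m)))"

definition Of :: "nat \<Rightarrow> int fps" where
  "Of N = Abs_fps (\<lambda>m. (-1) ^ m * int (card (ob N m)))"

lemma Qf_0: "Qf 0 = 1"
  by (rule fps_ext) (simp add: Qf_def qb_0)

lemma Of_0: "Of 0 = 1"
  by (rule fps_ext) (simp add: Of_def ob_0)

lemma Qf_Suc: "Qf (Suc N) = (1 + fps_X ^ Suc N) * Qf N"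
proof (rule fps_ext)
  fix m
  have "((1 + fps_X ^ Suc N) * Qf N) $ m = Qf N $ m + (fps_X ^ Suc N * Qf N) $ m"
    by (simp add: algebra_simps)
  also have "\<dots> = Qf (Suc N) $ m"
    unfolding fps_X_power_mult_nth using card_qb_Suc[of N m] by (simp add: Qf_def)
  finally show "Qf (Suc N) $ m = ((1 + fps_X ^ Suc N) * Qf N) $ m" by simp
qed

lemma Of_Suc: "Of (Suc N) = (if odd (Suc N) then (1 - fps_X ^ Suc N) * Of N else Of N)"
proof (cases "odd (Suc N)")
  case False
  have "Of (Suc N) = Of N"
    by (rule fps_ext) (use card_ob_Suc False in \<open>simp add: Of_def\<close>)
  then show ?thesis using False by simp
next
  case True
  have "Of (Suc N) = (1 - fps_X ^ Suc N) * Of N"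
  proof (rule fps_ext)
    fix m
    have "((1 - fps_X ^ Suc N) * Of N) $ m = Of N $ m - (fps_X ^ Suc N * Of N) $ m"
      by (simp add: algebra_simps)
    also have "\<dots> = Of (Suc N) $ m"
    proof (cases "Suc N \<le> m")
      case le: True
      have sgn: "(-1::int) ^ m = - ((-1) ^ (m - Suc N))"
      proof -
        obtain d where d: "m = Suc N + d" using le_Suc_ex[OF le] by blast
        have "(-1::int) ^ (Suc N + d) = - ((-1) ^ d)" using True by (simp add: power_add)
        then show ?thesis using d by simp
      qed
      show ?thesis
        unfolding fps_X_power_mult_nth using card_ob_Suc[of N m] le True
        by (simp add: Of_def sgn algebra_simps)
    next
      case False
      then show ?thesis
        unfolding fps_X_power_mult_nth using card_ob_Suc[of N m] by (simp add: Of_def)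
    qed
    finally show "Of (Suc N) $ m = ((1 - fps_X ^ Suc N) * Of N) $ m" by simp
  qed
  then show ?thesis using True by simp
qed

unbundle fps_syntax

definition Dp :: "nat \<Rightarrow> int fps" where
  "Dp N = (\<Prod>k\<in>{1..N}. 1 - fps_X ^ (2 * k))"

definition Fp :: "nat \<Rightarrow> int fps" where
  "Fp N = (\<Prod>k\<in>{Suc N..2 * N}. 1 - fps_X ^ k)"

lemma Dp_Suc: "Dp (Suc N) = Dp N * (1 - fps_X ^ (2 * Suc N))"
  unfolding Dp_def by (simp add: prod.cl_ivl_Suc)

lemma X2: "(fps_X :: int fps) ^ (2 * k) = fps_X ^ k * fps_X ^ k"
  by (simp add: mult_2 power_add)

lemma QE: "Qf N * Ep N = Dp N"
proof (induction N)
  case 0 then show ?case by (simp add: Qf_0 Ep_def Dp_def)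
next
  case (Suc N)
  have "Qf (Suc N) * Ep (Suc N) = (Qf N * Ep N) * ((1 + fps_X ^ Suc N) * (1 - fps_X ^ Suc N))"
    unfolding Qf_Suc Ep_Suc by (simp only: ac_simps)
  also have "(1 + fps_X ^ Suc N) * (1 - fps_X ^ Suc N) = (1 - fps_X ^ (2 * Suc N) :: int fps)"
    unfolding X2 by (simp add: algebra_simps)
  finally show ?case using Suc by (simp add: Dp_Suc)
qed

lemma OD: "Of (2 * N) * Dp N = Ep (2 * N)"
proof (induction N)
  case 0 then show ?case by (simp add: Of_0 Ep_def Dp_def)
next
  case (Suc N)
  have e: "2 * Suc N = Suc (Suc (2 * N))" by simp
  have o1: "Of (Suc (Suc (2 * N))) = Of (Suc (2 * N))"
    using Of_Suc[of "Suc (2 * N)"] by simp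
  have o2: "Of (Suc (2 * N)) = (1 - fps_X ^ Suc (2 * N)) * Of (2 * N)"
    using Of_Suc[of "2 * N"] by simp
  have "Of (2 * Suc N) * Dp (Suc N) = (Of (2 * N) * Dp N) * ((1 - fps_X ^ Suc (2 * N)) * (1 - fps_X ^ Suc (Suc (2 * N))))"
    unfolding e o1 o2 Dp_Suc by (simp only: ac_simps)
  also have "\<dots> = Ep (2 * N) * (1 - fps_X ^ Suc (2 * N)) * (1 - fps_X ^ Suc (Suc (2 * N)))"
    using Suc by (simp only: ac_simps)
  also have "\<dots> = Ep (2 * Suc N)"
    unfolding e Ep_Suc ..
  finally show ?case .
qed

lemma Ep_split: "Ep (2 * N) = Ep N * Fp N"
proof -
  have "{1..2 * N} = {1..N} \<union> {Suc N..2 * N}" by auto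
  then show ?thesis
    unfolding Ep_def Fp_def by (simp add: prod.union_disjoint[symmetric] ivl_disj_int)
qed

lemma low_prod: "finite S \<Longrightarrow> (\<forall>k\<in>S. m < k) \<Longrightarrow> (\<Prod>k\<in>S. 1 - fps_X ^ k :: int fps) $ m = (if m = 0 then 1 else 0)"
proof (induction S rule: finite_induct)
  case empty then show ?case by simp
next
  case (insert x F)
  have "(\<Prod>k\<in>insert x F. 1 - fps_X ^ k :: int fps) $ m = ((1 - fps_X ^ x) * (\<Prod>k\<in>F. 1 - fps_X ^ k)) $ m"
    using insert by simp
  also have "\<dots> = (\<Prod>k\<in>F. 1 - fps_X ^ k :: int fps) $ m - (fps_X ^ x * (\<Prod>k\<in>F. 1 - fps_X ^ k)) $ m"
    by (simp add: algebra_simps)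
  also have "(fps_X ^ x * (\<Prod>k\<in>F. 1 - fps_X ^ k :: int fps)) $ m = 0"
    using insert.prems unfolding fps_X_power_mult_nth by simp
  finally show ?case using insert by simp
qed

lemma Fp_nth: "m \<le> N \<Longrightarrow> Fp N $ m = (if m = 0 then 1 else 0)"
  unfolding Fp_def by (rule low_prod) auto

lemma QO: "Qf N * Of (2 * N) = Fp N"
proof -
  have "(Qf N * Of (2 * N)) * Ep N = Of (2 * N) * (Qf N * Ep N)" by (simp only: ac_simps)
  also have "\<dots> = Ep N * Fp N" by (simp only: QE OD Ep_split)
  also have "\<dots> = Fp N * Ep N" by (simp only: ac_simps)
  finally have eq: "(Qf N * Of (2 * N)) * Ep N = Fp N * Ep N" .
  have "Ep N $ 0 = 1" using Ep_pent[of 0 N] by (simp add: pent_omega_def)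
  then have "Ep N \<noteq> 0" by auto
  with eq show ?thesis by simp
qed

lemma le_sum_nat: "finite A \<Longrightarrow> x \<in> A \<Longrightarrow> x \<le> \<Sum>(A::nat set)"
  using member_le_sum[of x A "\<lambda>x. x"] by simp

lemma qb_dp: assumes "i \<le> N" shows "qb N i = distinct_partitions i"
proof (rule set_eqI)
  fix A
  show "A \<in> qb N i \<longleftrightarrow> A \<in> distinct_partitions i"
  proof
    assume "A \<in> qb N i"
    then have "A \<subseteq> {1..N}" "\<Sum>A = i" by (auto simp: qb_def)
    moreover then have "finite A" using finite_subset by blast
    ultimately show "A \<in> distinct_partitions i" by (auto simp: distinct_partitions_def)
  next
    assume "A \<in> distinct_partitions i"
    then have A: "finite A" "\<forall>x\<in>A. 0 < x" "\<Sum>A = i" by (auto simp: distinct_partitions_def)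
    have "A \<subseteq> {1..N}"
    proof
      fix x assume "x \<in> A"
      then have "x \<le> i" "0 < x" using le_sum_nat[OF A(1)] A by auto
      then show "x \<in> {1..N}" using assms by auto
    qed
    then show "A \<in> qb N i" using A by (auto simp: qb_def)
  qed
qed

lemma ob_odp: assumes "i \<le> N" shows "ob N i = {A. finite A \<and> (\<forall>x\<in>A. odd x) \<and> \<Sum>A = i}"
proof (rule set_eqI)
  fix A
  show "A \<in> ob N i \<longleftrightarrow> A \<in> {A. finite A \<and> (\<forall>x\<in>A. odd x) \<and> \<Sum>A = i}"
  proof
    assume "A \<in> ob N i"
    then have "A \<subseteq> {1..N}" "\<Sum>A = i" "\<forall>x\<in>A. odd x" by (auto simp: ob_def)
    moreover then have "finite A" using finite_subset by blast
    ultimately show "A \<in> {A. finite A \<and> (\<forall>x\<in>A. odd x) \<and> \<Sum>A = i}" by auto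
  next
    assume "A \<in> {A. finite A \<and> (\<forall>x\<in>A. odd x) \<and> \<Sum>A = i}"
    then have A: "finite A" "\<forall>x\<in>A. odd x" "\<Sum>A = i" by auto
    have "A \<subseteq> {1..N}"
    proof
      fix x assume "x \<in> A"
      then have "x \<le> i" "odd x" using le_sum_nat[OF A(1)] A by auto
      then have "x \<le> i" "0 < x" by (auto intro: odd_pos)
      then show "x \<in> {1..N}" using assms by auto
    qed
    then show "A \<in> ob N i" using A by (auto simp: ob_def)
  qed
qed

lemma conv_q: "(\<Sum>i=0..m. int (card (distinct_partitions i)) * ((-1) ^ (m - i) * odp (m - i))) = (if m = 0 then 1 else 0)"
proof -
  have "(Qf m * Of (2 * m)) $ m = Fp m $ m" by (simp only: QO)
  also have "\<dots> = (if m = 0 then 1 else 0)" by (simp add: Fp_nth)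
  finally have 1: "(Qf m * Of (2 * m)) $ m = (if m = 0 then 1 else 0)" .
  have "(Qf m * Of (2 * m)) $ m = (\<Sum>i=0..m. int (card (distinct_partitions i)) * ((-1) ^ (m - i) * odp (m - i)))"
    unfolding fps_mult_nth
  proof (rule sum.cong[OF refl])
    fix i assume "i \<in> {0..m}"
    then have "i \<le> m" "m - i \<le> 2 * m" by auto
    then show "Qf m $ i * Of (2 * m) $ (m - i) = int (card (distinct_partitions i)) * ((-1) ^ (m - i) * odp (m - i))"
      by (simp add: Qf_def Of_def qb_dp ob_odp odp_def)
  qed
  with 1 show ?thesis by simp
qed

lemma divsum:
  fixes w F :: "nat \<Rightarrow> int"
  shows "(\<Sum>k\<in>{1..n}. \<Sum>r\<in>{1..n}. if r * k \<le> n then w r * F (r * k) else 0)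
       = (\<Sum>j\<in>{1..n}. (\<Sum>d\<in>{d. 1 \<le> d \<and> d dvd j}. w (j div d)) * F j)"
proof -
  have dv: "{d. 1 \<le> d \<and> d dvd j} = {d \<in> {1..n}. d dvd j}" if "j \<in> {1..n}" for j
  proof -
    have "d \<le> n" if "1 \<le> d" "d dvd j" for d
      using dvd_imp_le[OF that(2)] \<open>j \<in> {1..n}\<close> by auto
    then show ?thesis using that by auto
  qed
  have "(\<Sum>j\<in>{1..n}. (\<Sum>d\<in>{d. 1 \<le> d \<and> d dvd j}. w (j div d)) * F j)
      = (\<Sum>j\<in>{1..n}. \<Sum>d\<in>{d \<in> {1..n}. d dvd j}. w (j div d) * F j)"
  proof (rule sum.cong[OF refl])
    fix j assume j: "j \<in> {1..n}"
    show "(\<Sum>d\<in>{d. 1 \<le> d \<and> d dvd j}. w (j div d)) * F j = (\<Sum>d\<in>{d \<in> {1..n}. d dvd j}. w (j div d) * F j)"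
      by (simp only: dv[OF j] sum_distrib_right)
  qed
  also have "\<dots> = (\<Sum>d\<in>{1..n}. \<Sum>j\<in>{j \<in> {1..n}. d dvd j}. w (j div d) * F j)"
    by (rule sum.swap_restrict) auto
  also have "\<dots> = (\<Sum>k\<in>{1..n}. \<Sum>r\<in>{1..n}. if r * k \<le> n then w r * F (r * k) else 0)"
  proof (rule sum.cong[OF refl])
    fix d assume d: "d \<in> {1..n}"
    have img: "{j \<in> {1..n}. d dvd j} = (\<lambda>r. r * d) ` {r \<in> {1..n}. r * d \<le> n}"
    proof (rule set_eqI, rule iffI)
      fix j assume j: "j \<in> {j \<in> {1..n}. d dvd j}"
      then obtain c where c: "j = d * c" by (auto elim: dvdE)
      have "1 \<le> c" using j c by (cases c) auto
      moreover have "c \<le> j" using c d by simp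
      then have "c \<le> n" using j by simp
      ultimately have "c \<in> {r \<in> {1..n}. r * d \<le> n}" using j c by (auto simp: mult.commute)
      then show "j \<in> (\<lambda>r. r * d) ` {r \<in> {1..n}. r * d \<le> n}" using c by (auto simp: mult.commute)
    next
      fix j assume "j \<in> (\<lambda>r. r * d) ` {r \<in> {1..n}. r * d \<le> n}"
      then obtain r where r: "r \<in> {1..n}" "r * d \<le> n" "j = r * d" by auto
      then have "1 \<le> j" using d by simp
      then show "j \<in> {j \<in> {1..n}. d dvd j}" using r by auto
    qed
    have inj: "inj_on (\<lambda>r. r * d) {r \<in> {1..n}. r * d \<le> n}"
      using d by (auto simp: inj_on_def)
    have "(\<Sum>j\<in>{j \<in> {1..n}. d dvd j}. w (j div d) * F j)
        = (\<Sum>r\<in>{r \<in> {1..n}. r * d \<le> n}. w (r * d div d) * F (r * d))"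
      by (simp only: img sum.reindex[OF inj] comp_def)
    also have "\<dots> = (\<Sum>r\<in>{r \<in> {1..n}. r * d \<le> n}. w r * F (r * d))"
      using d by simp
    also have "\<dots> = (\<Sum>r\<in>{1..n}. if r * d \<le> n then w r * F (r * d) else 0)"
      by (rule sum.inter_filter) simp
    finally show "(\<Sum>j\<in>{j \<in> {1..n}. d dvd j}. w (j div d) * F j)
        = (\<Sum>r\<in>{1..n}. if r * d \<le> n then w r * F (r * d) else 0)" .
  qed
  finally show ?thesis by simp
qed

lemma finite_partitions: "finite (partitions n)"
  using finite_pb[of n n] pb_partitions[of n n] by simp

lemma finite_dp: "finite (distinct_partitions n)"
  using finite_qb[of n n] qb_dp[of n n] by simp

lemma card_cnt:
  assumes k: "1 \<le> k"
  shows "card {M \<in> partitions n. r \<le> count M k} = (if r * k \<le> n then card (partitions (n - r * k)) else 0)"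
proof -
  define R where "R = replicate_mset r k"
  have sR: "sum_mset R = r * k" by (simp add: R_def)
  have iff: "r \<le> count M k \<longleftrightarrow> R \<subseteq># M" for M
    unfolding R_def by (rule count_le_replicate_mset_subset_eq)
  have sumM: "sum_mset M = r * k + sum_mset (M - R)" if "R \<subseteq># M" for M
  proof -
    have "R + (M - R) = M" using that by (rule subset_mset.add_diff_inverse)
    then have "sum_mset M = sum_mset (R + (M - R))" by simp
    then show ?thesis using sR by simp
  qed
  show ?thesis
  proof (cases "r * k \<le> n")
    case False
    have E: "{M \<in> partitions n. r \<le> count M k} = {}"
    proof (rule ccontr)
      assume "{M \<in> partitions n. r \<le> count M k} \<noteq> {}"
      then obtain M where M: "M \<in> partitions n" "R \<subseteq># M" using iff by auto
      then have "sum_mset M = n" by (simp add: partitions_def)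
      then show False using sumM[OF M(2)] False by simp
    qed
    show ?thesis unfolding E if_not_P[OF False] by simp
  next
    case True
    have bij: "bij_betw (\<lambda>M. M - R) {M \<in> partitions n. r \<le> count M k} (partitions (n - r * k))"
    proof (rule bij_betw_byWitness[where f'="\<lambda>N. N + R"])
      show "\<forall>a\<in>{M \<in> partitions n. r \<le> count M k}. a - R + R = a"
        using iff by (auto simp: subset_mset.diff_add)
      show "\<forall>a'\<in>partitions (n - r * k). a' + R - R = a'" by simp
      show "(\<lambda>M. M - R) ` {M \<in> partitions n. r \<le> count M k} \<subseteq> partitions (n - r * k)"
      proof
        fix N assume "N \<in> (\<lambda>M. M - R) ` {M \<in> partitions n. r \<le> count M k}"
        then obtain M where M: "M \<in> partitions n" "R \<subseteq># M" "N = M - R" using iff by auto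
        have "\<forall>x\<in>#N. 0 < x" using M by (auto simp: partitions_def dest: in_diffD)
        moreover have "sum_mset N = n - r * k"
        proof -
          have "sum_mset M = n" using M(1) by (simp add: partitions_def)
          then show ?thesis using sumM[OF M(2)] M(3) by arith
        qed
        ultimately show "N \<in> partitions (n - r * k)" by (simp add: partitions_def)
      qed
      show "(\<lambda>N. N + R) ` partitions (n - r * k) \<subseteq> {M \<in> partitions n. r \<le> count M k}"
      proof
        fix M assume "M \<in> (\<lambda>N. N + R) ` partitions (n - r * k)"
        then obtain N where N: "N \<in> partitions (n - r * k)" "M = N + R" by auto
        have "\<forall>x\<in>#M. 0 < x" using N k by (auto simp: partitions_def R_def)
        moreover have "sum_mset M = n" using N sR True by (simp add: partitions_def)
        moreover have "R \<subseteq># M" using N by simp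
        ultimately show "M \<in> {M \<in> partitions n. r \<le> count M k}" using iff by (simp add: partitions_def)
      qed
    qed
    then show ?thesis using True bij_betw_same_card by auto
  qed
qed

lemma size_as_sum:
  assumes M: "M \<in> partitions n"
  shows "size M = (\<Sum>k\<in>{1..n}. count M k)"
proof -
  have sub: "set_mset M \<subseteq> {1..n}"
  proof
    fix x assume "x \<in> set_mset M"
    then have "x \<in># M" by simp
    then have "x \<le> n" "0 < x" using mem_le_sum[of x M] M by (auto simp: partitions_def)
    then show "x \<in> {1..n}" by simp
  qed
  have "size M = (\<Sum>k\<in>set_mset M. count M k)" by (rule size_multiset_overloaded_eq)
  also have "\<dots> = (\<Sum>k\<in>{1..n}. count M k)"
    by (rule sum.mono_neutral_left) (use sub in \<open>auto simp: not_in_iff\<close>)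
  finally show ?thesis .
qed

lemma count_as_sum:
  assumes "c \<le> n"
  shows "int c = (\<Sum>r\<in>{1..n}. if r \<le> c then 1 else 0)"
proof -
  have "(\<Sum>r\<in>{1..n}. if r \<le> c then 1 else 0) = (\<Sum>r\<in>{r \<in> {1..n}. r \<le> c}. 1::int)"
    by (rule sum.inter_filter[symmetric]) simp
  also have "{r \<in> {1..n}. r \<le> c} = {1..c}" using assms by auto
  finally show ?thesis by simp
qed

lemma Np_decomp: "Np n = (\<Sum>j=1..n. tau j * int (card (partitions (n - j))))"
proof -
  let ?P = "partitions n"
  have "Np n = (\<Sum>M\<in>?P. \<Sum>k\<in>{1..n}. \<Sum>r\<in>{1..n}. if r \<le> count M k then 1 else 0)"
    unfolding Np_def
  proof (rule sum.cong[OF refl])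
    fix M assume M: "M \<in> ?P"
    have "int (size M) = (\<Sum>k\<in>{1..n}. int (count M k))" using size_as_sum[OF M] by simp
    also have "\<dots> = (\<Sum>k\<in>{1..n}. \<Sum>r\<in>{1..n}. if r \<le> count M k then 1 else 0)"
    proof (rule sum.cong[OF refl])
      fix k
      have "count M k \<le> size M" by (rule count_le_size)
      also have "size M \<le> n" using size_le_sum[of M] M by (simp add: partitions_def)
      finally show "int (count M k) = (\<Sum>r\<in>{1..n}. if r \<le> count M k then 1 else 0)"
        by (rule count_as_sum)
    qed
    finally show "int (size M) = (\<Sum>k\<in>{1..n}. \<Sum>r\<in>{1..n}. if r \<le> count M k then 1 else 0)" .
  qed
  also have "\<dots> = (\<Sum>k\<in>{1..n}. \<Sum>M\<in>?P. \<Sum>r\<in>{1..n}. if r \<le> count M k then 1 else 0)"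
    by (rule sum.swap)
  also have "\<dots> = (\<Sum>k\<in>{1..n}. \<Sum>r\<in>{1..n}. \<Sum>M\<in>?P. if r \<le> count M k then 1 else 0)"
    by (rule sum.cong[OF refl], rule sum.swap)
  also have "\<dots> = (\<Sum>k\<in>{1..n}. \<Sum>r\<in>{1..n}. if r * k \<le> n then 1 * int (card (partitions (n - r * k))) else 0)"
  proof (intro sum.cong[OF refl])
    fix k r assume k: "k \<in> {1..n}"
    have "(\<Sum>M\<in>?P. if r \<le> count M k then 1 else 0) = (\<Sum>M\<in>{M \<in> ?P. r \<le> count M k}. 1::int)"
      by (rule sum.inter_filter[symmetric]) (rule finite_partitions)
    also have "\<dots> = int (card {M \<in> ?P. r \<le> count M k})" by simp
    also have "\<dots> = (if r * k \<le> n then 1 * int (card (partitions (n - r * k))) else 0)"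
      using card_cnt[of k n r] k by simp
    finally show "(\<Sum>M\<in>?P. if r \<le> count M k then 1 else 0) = (if r * k \<le> n then 1 * int (card (partitions (n - r * k))) else 0)" .
  qed
  also have "\<dots> = (\<Sum>j\<in>{1..n}. (\<Sum>d\<in>{d. 1 \<le> d \<and> d dvd j}. 1) * int (card (partitions (n - j))))"
    by (rule divsum[where w="\<lambda>_. 1" and F="\<lambda>j. int (card (partitions (n - j)))"])
  also have "\<dots> = (\<Sum>j=1..n. tau j * int (card (partitions (n - j))))"
    by (simp add: tau_def)
  finally show ?thesis .
qed

definition qn :: "nat \<Rightarrow> int" where "qn m = int (card (distinct_partitions m))"

lemma dp_sub: "A \<in> distinct_partitions n \<Longrightarrow> A \<subseteq> {1..n}"
  using qb_dp[of n n] by (auto simp: qb_def)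

lemma dp_card_as_sum:
  assumes A: "A \<in> distinct_partitions n"
  shows "int (card A) = (\<Sum>k\<in>{1..n}. if k \<in> A then 1 else 0)"
proof -
  have "(\<Sum>k\<in>{1..n}. if k \<in> A then 1 else 0) = (\<Sum>k\<in>{k \<in> {1..n}. k \<in> A}. 1::int)"
    by (rule sum.inter_filter[symmetric]) simp
  also have "{k \<in> {1..n}. k \<in> A} = A" using dp_sub[OF A] by auto
  finally show ?thesis by simp
qed

lemma e_rec:
  assumes k: "1 \<le> k"
  shows "card {A \<in> distinct_partitions n. k \<in> A} = (if k \<le> n then card {B \<in> distinct_partitions (n - k). k \<notin> B} else 0)"
proof (cases "k \<le> n")
  case False
  have E: "{A \<in> distinct_partitions n. k \<in> A} = {}"
  proof (rule ccontr)
    assume "{A \<in> distinct_partitions n. k \<in> A} \<noteq> {}"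
    then obtain A where A: "A \<in> distinct_partitions n" "k \<in> A" by auto
    then have "k \<le> \<Sum>A" using le_sum_nat[of A k] by (auto simp: distinct_partitions_def)
    then show False using A False by (simp add: distinct_partitions_def)
  qed
  show ?thesis unfolding E if_not_P[OF False] by simp
next
  case True
  have "bij_betw (\<lambda>A. A - {k}) {A \<in> distinct_partitions n. k \<in> A} {B \<in> distinct_partitions (n - k). k \<notin> B}"
  proof (rule bij_betw_byWitness[where f'="insert k"])
    show "\<forall>a\<in>{A \<in> distinct_partitions n. k \<in> A}. insert k (a - {k}) = a" by auto
    show "\<forall>a'\<in>{B \<in> distinct_partitions (n - k). k \<notin> B}. insert k a' - {k} = a'" by auto
    show "(\<lambda>A. A - {k}) ` {A \<in> distinct_partitions n. k \<in> A} \<subseteq> {B \<in> distinct_partitions (n - k). k \<notin> B}"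
    proof
      fix B assume "B \<in> (\<lambda>A. A - {k}) ` {A \<in> distinct_partitions n. k \<in> A}"
      then obtain A where A: "A \<in> distinct_partitions n" "k \<in> A" "B = A - {k}" by auto
      have fin: "finite A" using A by (simp add: distinct_partitions_def)
      have s1: "\<Sum>A = k + \<Sum>(A - {k})" using sum.remove[OF fin A(2), of "\<lambda>x. x"] by simp
      have s2: "\<Sum>A = n" using A(1) by (simp add: distinct_partitions_def)
      have "\<Sum>B = n - k" using s1 s2 A(3) by arith
      then show "B \<in> {B \<in> distinct_partitions (n - k). k \<notin> B}"
        using A fin by (auto simp: distinct_partitions_def)
    qed
    show "insert k ` {B \<in> distinct_partitions (n - k). k \<notin> B} \<subseteq> {A \<in> distinct_partitions n. k \<in> A}"
    proof
      fix A assume "A \<in> insert k ` {B \<in> distinct_partitions (n - k). k \<notin> B}"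
      then obtain B where B: "B \<in> distinct_partitions (n - k)" "k \<notin> B" "A = insert k B" by auto
      have fin: "finite B" using B by (simp add: distinct_partitions_def)
      have "\<Sum>A = k + \<Sum>B" using B fin by simp
      then have "\<Sum>A = n" using B True by (simp add: distinct_partitions_def)
      then show "A \<in> {A \<in> distinct_partitions n. k \<in> A}"
        using B fin k by (auto simp: distinct_partitions_def)
    qed
  qed
  then show ?thesis using True bij_betw_same_card by auto
qed

lemma split_card: "qn m = int (card {B \<in> distinct_partitions m. k \<in> B}) + int (card {B \<in> distinct_partitions m. k \<notin> B})"
proof -
  have u: "distinct_partitions m = {B \<in> distinct_partitions m. k \<in> B} \<union> {B \<in> distinct_partitions m. k \<notin> B}" by auto
  have "card (distinct_partitions m) = card {B \<in> distinct_partitions m. k \<in> B} + card {B \<in> distinct_partitions m. k \<notin> B}"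
    by (subst u, rule card_Un_disjoint) (auto intro: finite_subset[OF _ finite_dp])
  then show ?thesis by (simp add: qn_def)
qed

definition Sb :: "nat \<Rightarrow> nat \<Rightarrow> nat \<Rightarrow> int" where
  "Sb k B m = (\<Sum>r\<in>{1..B}. if r * k \<le> m then (-1) ^ (r - 1) * qn (m - r * k) else 0)"

lemma Sb_bound:
  assumes k: "1 \<le> k" and mB: "m \<le> B"
  shows "Sb k B m = Sb k m m"
  unfolding Sb_def
proof (rule sum.mono_neutral_right)
  show "finite {1..B}" by simp
  show "{1..m} \<subseteq> {1..B}" using mB by auto
  show "\<forall>i\<in>{1..B} - {1..m}. (if i * k \<le> m then (-1) ^ (i - 1) * qn (m - i * k) else 0) = 0"
  proof
    fix i assume "i \<in> {1..B} - {1..m}"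
    then have "m < i" by auto
    moreover have "i \<le> i * k" using k by simp
    ultimately have "\<not> i * k \<le> m" by linarith
    then show "(if i * k \<le> m then (-1) ^ (i - 1) * qn (m - i * k) else 0) = 0" by simp
  qed
qed

lemma Sb_Suc:
  assumes k: "1 \<le> k" and km: "k \<le> m"
  shows "Sb k (Suc B) m = qn (m - k) - Sb k B (m - k)"
proof -
  define f where "f r = (if r * k \<le> m then (-1) ^ (r - 1) * qn (m - r * k) else 0)" for r
  have "Sb k (Suc B) m = (\<Sum>r\<in>{1..Suc B}. f r)" by (simp add: Sb_def f_def)
  also have "\<dots> = f 1 + (\<Sum>r\<in>{Suc 1..Suc B}. f r)"
    by (rule sum.atLeast_Suc_atMost) simp
  also have "(\<Sum>r\<in>{Suc 1..Suc B}. f r) = (\<Sum>r\<in>{1..B}. f (Suc r))"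
    by (rule sum.shift_bounds_cl_Suc_ivl)
  also have "\<dots> = (\<Sum>r\<in>{1..B}. - (if r * k \<le> m - k then (-1) ^ (r - 1) * qn (m - k - r * k) else 0))"
  proof (rule sum.cong[OF refl])
    fix r assume "r \<in> {1..B}"
    then have r: "1 \<le> r" by simp
    have c: "Suc r * k \<le> m \<longleftrightarrow> r * k \<le> m - k" using km by auto
    have d: "m - Suc r * k = m - k - r * k" by simp
    have s: "(-1::int) ^ (Suc r - 1) = - ((-1) ^ (r - 1))"
    proof -
      obtain t where "r = Suc t" using r by (cases r) auto
      then show ?thesis by simp
    qed
    show "f (Suc r) = - (if r * k \<le> m - k then (-1) ^ (r - 1) * qn (m - k - r * k) else 0)"
      unfolding f_def c d s by simp
  qed
  also have "\<dots> = - Sb k B (m - k)" by (simp add: Sb_def sum_negf)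
  also have "f 1 = qn (m - k)" using km by (simp add: f_def)
  finally show ?thesis by simp
qed

lemma e_closed:
  assumes k: "1 \<le> k"
  shows "int (card {A \<in> distinct_partitions n. k \<in> A}) = Sb k n n"
  using k
proof (induction n rule: less_induct)
  case (less n)
  show ?case
  proof (cases "k \<le> n")
    case False
    have "Sb k n n = 0" unfolding Sb_def
    proof (rule sum.neutral, rule ballI)
      fix r assume "r \<in> {1..n}"
      then have "k \<le> r * k" by simp
      then have "\<not> r * k \<le> n" using False by linarith
      then show "(if r * k \<le> n then (-1) ^ (r - 1) * qn (n - r * k) else 0) = 0" by simp
    qed
    then show ?thesis using e_rec[OF k, of n] False by simp
  next
    case True
    then obtain B where n: "n = Suc B" using k by (cases n) auto
    have "Sb k n n = qn (n - k) - Sb k B (n - k)" unfolding n by (rule Sb_Suc[OF k]) (use True n in simp)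
    also have "Sb k B (n - k) = Sb k (n - k) (n - k)" by (rule Sb_bound[OF k]) (use n k in simp)
    also have "\<dots> = int (card {A \<in> distinct_partitions (n - k). k \<in> A})"
      using less.IH[of "n - k"] k True by simp
    finally have "Sb k n n = int (card {B \<in> distinct_partitions (n - k). k \<notin> B})"
      using split_card[of "n - k" k] by simp
    then show ?thesis using e_rec[OF k, of n] True by simp
  qed
qed

lemma Nq_decomp: "Nq n = (\<Sum>j=1..n. tau_s j * qn (n - j))"
proof -
  let ?D = "distinct_partitions n"
  have "Nq n = (\<Sum>A\<in>?D. \<Sum>k\<in>{1..n}. if k \<in> A then 1 else 0)"
    unfolding Nq_def by (rule sum.cong[OF refl]) (rule dp_card_as_sum)
  also have "\<dots> = (\<Sum>k\<in>{1..n}. \<Sum>A\<in>?D. if k \<in> A then 1 else 0)" by (rule sum.swap)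
  also have "\<dots> = (\<Sum>k\<in>{1..n}. \<Sum>r\<in>{1..n}. if r * k \<le> n then (-1) ^ (r - 1) * qn (n - r * k) else 0)"
  proof (rule sum.cong[OF refl])
    fix k assume "k \<in> {1..n}"
    then have k: "1 \<le> k" by simp
    have "(\<Sum>A\<in>?D. if k \<in> A then 1 else 0) = (\<Sum>A\<in>{A \<in> ?D. k \<in> A}. 1::int)"
      by (rule sum.inter_filter[symmetric]) (rule finite_dp)
    also have "\<dots> = Sb k n n" using e_closed[OF k, of n] by simp
    finally show "(\<Sum>A\<in>?D. if k \<in> A then 1 else 0) = (\<Sum>r\<in>{1..n}. if r * k \<le> n then (-1) ^ (r - 1) * qn (n - r * k) else 0)"
      by (simp add: Sb_def)
  qed
  also have "\<dots> = (\<Sum>j\<in>{1..n}. (\<Sum>d\<in>{d. 1 \<le> d \<and> d dvd j}. (-1) ^ (j div d - 1)) * qn (n - j))"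
    by (rule divsum[where w="\<lambda>r. (-1) ^ (r - 1)" and F="\<lambda>j. qn (n - j)"])
  also have "\<dots> = (\<Sum>j=1..n. tau_s j * qn (n - j))"
    by (simp add: tau_s_def)
  finally show ?thesis .
qed

lemma conv_final:
  fixes a b t N :: "nat \<Rightarrow> int"
  assumes ab: "\<And>m. (\<Sum>i=0..m. a i * b (m - i)) = (if m = 0 then 1 else 0)"
    and N: "\<And>k. N k = (\<Sum>j=1..k. t j * a (k - j))"
    and n: "0 < n"
  shows "(\<Sum>k=1..n. N k * b (n - k)) = t n"
proof -
  have "(\<Sum>k=1..n. N k * b (n - k)) = (\<Sum>k\<in>{1..n}. \<Sum>j\<in>{1..n}. if j \<le> k then t j * a (k - j) * b (n - k) else 0)"
  proof (rule sum.cong[OF refl])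
    fix k assume k: "k \<in> {1..n}"
    have "N k * b (n - k) = (\<Sum>j\<in>{1..k}. t j * a (k - j) * b (n - k))"
      unfolding N by (simp add: sum_distrib_right)
    also have "{1..k} = {j \<in> {1..n}. j \<le> k}" using k by auto
    also have "(\<Sum>j\<in>{j \<in> {1..n}. j \<le> k}. t j * a (k - j) * b (n - k)) = (\<Sum>j\<in>{1..n}. if j \<le> k then t j * a (k - j) * b (n - k) else 0)"
      by (rule sum.inter_filter) simp
    finally show "N k * b (n - k) = (\<Sum>j\<in>{1..n}. if j \<le> k then t j * a (k - j) * b (n - k) else 0)" .
  qed
  also have "\<dots> = (\<Sum>j\<in>{1..n}. \<Sum>k\<in>{1..n}. if j \<le> k then t j * a (k - j) * b (n - k) else 0)"
    by (rule sum.swap)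
  also have "\<dots> = (\<Sum>j\<in>{1..n}. if j = n then t j else 0)"
  proof (rule sum.cong[OF refl])
    fix j assume j: "j \<in> {1..n}"
    have "(\<Sum>k\<in>{1..n}. if j \<le> k then t j * a (k - j) * b (n - k) else 0) = (\<Sum>k\<in>{k \<in> {1..n}. j \<le> k}. t j * a (k - j) * b (n - k))"
      by (rule sum.inter_filter[symmetric]) simp
    also have "{k \<in> {1..n}. j \<le> k} = {0 + j..(n - j) + j}" using j by auto
    also have "(\<Sum>k\<in>{0 + j..(n - j) + j}. t j * a (k - j) * b (n - k)) = (\<Sum>i\<in>{0..n - j}. t j * a (i + j - j) * b (n - (i + j)))"
      by (rule sum.shift_bounds_cl_nat_ivl)
    also have "\<dots> = t j * (\<Sum>i\<in>{0..n - j}. a i * b ((n - j) - i))"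
      by (simp add: sum_distrib_left mult.assoc add.commute)
    also have "\<dots> = (if j = n then t j else 0)" using ab[of "n - j"] j by auto
    finally show "(\<Sum>k\<in>{1..n}. if j \<le> k then t j * a (k - j) * b (n - k) else 0) = (if j = n then t j else 0)" .
  qed
  also have "\<dots> = t n" using n by simp
  finally show ?thesis .
qed

theorem corollary5:
  fixes n :: nat
  assumes "0 < n"
  shows "(\<Sum>k=1..n. Np k * pent_omega (n - k)) = tau n \<and>
         (\<Sum>k=1..n. (-1) ^ (n - k) * Nq k * odp (n - k)) = tau_s n"
proof
  show "(\<Sum>k=1..n. Np k * pent_omega (n - k)) = tau n"
    by (rule conv_final[where a="\<lambda>i. int (card (partitions i))"])
       (use conv_p Np_decomp assms in auto)
next
  have "(\<Sum>k=1..n. (-1) ^ (n - k) * Nq k * odp (n - k)) = (\<Sum>k=1..n. Nq k * ((-1) ^ (n - k) * odp (n - k)))"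
    by (simp add: ac_simps)
  also have "\<dots> = tau_s n"
    by (rule conv_final[where a=qn and b="\<lambda>m. (-1) ^ m * odp m"])
       (use conv_q Nq_decomp assms in \<open>auto simp: qn_def\<close>)
  finally show "(\<Sum>k=1..n. (-1) ^ (n - k) * Nq k * odp (n - k)) = tau_s n" .
qed

end
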